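(* Let $A\in M_n(\mathbb{Z})$ induce an ergodic endomorphism of $\mathbb{T}^n$, and suppose there exist $P,B\in M_n(\mathbb{Z})$ with $\det P\neq0$ and $PA=BP$. If the torus endomorphism induced by $B$ admits a uniformly distributed sequence of periodic orbits, then so does $A$.
   Context: For $M\in M_n(\mathbb{Z})$ with $\det M\neq 0$, the induced endomorphism of $\mathbb{T}^n=\mathbb{R}^n/\mathbb{Z}^n$ is $x\mapsto Mx\bmod 1$; ergodic means ergodic with respect to Lebesgue measure. The metric on $\mathbb{T}^n$ is $d(x,y)=\min_{m\in\mathbb{Z}^n}|\tilde x-\tilde y-m|$ (Euclidean norm). For a periodic orbit $O$, $T(O)$ is its period (cardinality) and $d(O)=\min\{d(x,y):x,y\in O,x\neq y\}$. A sequence of periodic orbits $\{O_k\}$ is uniformly distributed if there is $C>0$ with $d(O_k)^nT(O_k)\ge C$ for all $k$ and $T(O_k)\to+\infty$. *)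

theory Defs
  imports "HOL-Analysis.Analysis"
begin

text \<open>The torus R^n/Z^n is represented by the fundamental domain [0,1)^n,
  with the dimension n given by the finite index type 'n.\<close>

definition torus :: "(real^'n) set" where
  "torus = {x. \<forall>i. 0 \<le> x $ i \<and> x $ i < 1}"

definition int_lattice :: "(real^'n) set" where
  "int_lattice = {m. \<forall>i. m $ i \<in> \<int>}"

definition rmat :: "int^'n^'n \<Rightarrow> real^'n^'n" where
  "rmat M = (\<chi> i j. of_int (M $ i $ j))"

definition tmap :: "int^'n^'n \<Rightarrow> real^'n \<Rightarrow> real^'n" where
  "tmap M x = (\<chi> i. frac ((rmat M *v x) $ i))"

definition tdist :: "real^'n \<Rightarrow> real^'n \<Rightarrow> real" where
  "tdist x y = Inf {norm (x - y - m) | m. m \<in> int_lattice}"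

definition torus_measure :: "(real^'n) measure" where
  "torus_measure = restrict_space lebesgue torus"

definition ergodic_tmap :: "int^'n^'n \<Rightarrow> bool" where
  "ergodic_tmap M \<longleftrightarrow>
     tmap M \<in> torus_measure \<rightarrow>\<^sub>M torus_measure \<and>
     (\<forall>S \<in> sets torus_measure.
        emeasure torus_measure (tmap M -` S \<inter> space torus_measure) = emeasure torus_measure S) \<and>
     (\<forall>S \<in> sets torus_measure.
        tmap M -` S \<inter> space torus_measure = S \<longrightarrow>
        measure torus_measure S = 0 \<or> measure torus_measure S = 1)"

definition periodic_orbit :: "int^'n^'n \<Rightarrow> (real^'n) set \<Rightarrow> bool" where
  "periodic_orbit M Orb \<longleftrightarrow>
     (\<exists>x \<in> torus. \<exists>p::nat. p > 0 \<and> (tmap M ^^ p) x = x \<and>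
        Orb = {(tmap M ^^ j) x | j. True})"

definition orbit_period :: "(real^'n) set \<Rightarrow> nat" where
  "orbit_period Orb = card Orb"

definition orbit_dist :: "(real^'n) set \<Rightarrow> real" where
  "orbit_dist Orb = Min {tdist x y | x y. x \<in> Orb \<and> y \<in> Orb \<and> x \<noteq> y}"

text \<open>A sequence of periodic orbits is uniformly distributed if d(O_k)^n T(O_k) \<ge> C > 0
  for all k (so each d(O_k) is defined, i.e. each O_k has at least two points) and
  T(O_k) \<rightarrow> \<infinity>.\<close>
definition unif_distributed :: "int^'n^'n \<Rightarrow> (nat \<Rightarrow> (real^'n) set) \<Rightarrow> bool" where
  "unif_distributed M Orb \<longleftrightarrow>
     (\<forall>k. periodic_orbit M (Orb k) \<and> orbit_period (Orb k) \<ge> 2) \<and>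
     (\<exists>C>0. \<forall>k. orbit_dist (Orb k) ^ CARD('n) * real (orbit_period (Orb k)) \<ge> C) \<and>
     filterlim (\<lambda>k. orbit_period (Orb k)) at_top sequentially"

end

theory Submission
  imports Defs
begin

definition fv :: "real^'n \<Rightarrow> real^'n" where
  "fv x = (\<chi> i. frac (x $ i))"

lemma lat_iff: "m \<in> int_lattice \<longleftrightarrow> (\<forall>i. m $ i \<in> \<int>)"
  by (simp add: int_lattice_def)

lemma lat_add: "a \<in> int_lattice \<Longrightarrow> b \<in> int_lattice \<Longrightarrow> a + b \<in> int_lattice"
  by (simp add: lat_iff)
lemma lat_diff: "a \<in> int_lattice \<Longrightarrow> b \<in> int_lattice \<Longrightarrow> a - b \<in> int_lattice"
  by (simp add: lat_iff)
lemma lat_uminus: "a \<in> int_lattice \<Longrightarrow> - a \<in> int_lattice"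
  by (simp add: lat_iff)
lemma lat_zero: "0 \<in> int_lattice"
  by (simp add: lat_iff)
lemma lat_mult: "m \<in> int_lattice \<Longrightarrow> rmat M *v m \<in> int_lattice"
  unfolding lat_iff matrix_vector_mult_def rmat_def
  by (auto intro!: Ints_sum Ints_mult)

lemma fv_torus: "fv x \<in> torus"
  by (simp add: fv_def torus_def frac_lt_1)
lemma fv_diff_lat: "x - fv x \<in> int_lattice"
  by (simp add: fv_def lat_iff frac_def)
lemma fv_add_lat: "m \<in> int_lattice \<Longrightarrow> fv (x + m) = fv x"
  by (simp add: fv_def lat_iff frac_add_int_right vec_eq_iff)
lemma fv_id: "x \<in> torus \<Longrightarrow> fv x = x"
  by (simp add: fv_def torus_def vec_eq_iff frac_eq)
lemma fv_eq_lat: "fv x = fv y \<longleftrightarrow> x - y \<in> int_lattice"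
proof
  assume "fv x = fv y"
  then have "x - y = (x - fv x) - (y - fv y)" by simp
  then show "x - y \<in> int_lattice" by (metis lat_diff fv_diff_lat)
next
  assume "x - y \<in> int_lattice"
  then show "fv x = fv y" using fv_add_lat[of "x - y" y] by simp
qed

lemma tmap_fv: "tmap M x = fv (rmat M *v x)"
  by (simp add: tmap_def fv_def)

lemma tmap_fv2: "tmap M (fv x) = fv (rmat M *v x)"
proof -
  have "rmat M *v fv x - rmat M *v x = - (rmat M *v (x - fv x))"
    by (simp add: matrix_vector_mult_diff_distrib)
  then have "rmat M *v fv x - rmat M *v x \<in> int_lattice"
    by (simp add: lat_uminus lat_mult fv_diff_lat)
  then show ?thesis by (simp add: tmap_fv fv_eq_lat)
qed

lemma rmat_mult: "rmat (P ** A) = rmat P ** rmat A"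
  by (simp add: rmat_def matrix_matrix_mult_def vec_eq_iff)

lemma det_rmat: "det (rmat P) = of_int (det P)"
  by (simp add: det_def rmat_def)

lemma tmap_comm:
  assumes "P ** A = B ** P"
  shows "tmap P (tmap A x) = tmap B (tmap P x)"
proof -
  have "tmap P (tmap A x) = fv (rmat (P ** A) *v x)"
    by (simp add: tmap_fv[of A] tmap_fv2 rmat_mult matrix_vector_mul_assoc)
  also have "\<dots> = tmap B (tmap P x)"
    by (simp add: assms tmap_fv[of P] tmap_fv2 rmat_mult matrix_vector_mul_assoc)
  finally show ?thesis .
qed

lemma tmap_comm_pow:
  assumes "P ** A = B ** P"
  shows "tmap P ((tmap A ^^ j) x) = (tmap B ^^ j) (tmap P x)"
  by (induction j) (simp_all add: tmap_comm[OF assms])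

lemma pow_torus: "x \<in> torus \<Longrightarrow> (tmap M ^^ j) x \<in> torus"
  by (induction j) (simp_all add: tmap_fv fv_torus)

lemma funpow_period: "(f ^^ p) x = x \<Longrightarrow> (f ^^ (p * k)) x = x"
  by (induction k) (simp_all add: funpow_add)

lemma funpow_mod: "(f ^^ p) x = x \<Longrightarrow> (f ^^ j) x = (f ^^ (j mod p)) x"
proof -
  assume h: "(f ^^ p) x = x"
  have "(f ^^ j) x = (f ^^ (j mod p + p * (j div p))) x" by simp
  also have "\<dots> = (f ^^ (j mod p)) ((f ^^ (p * (j div p))) x)" by (simp only: funpow_add comp_def)
  finally show ?thesis using funpow_period[OF h] by simp
qed

lemma orbit_finite:
  assumes "p > 0" "(f ^^ p) x = x"
  shows "{(f ^^ j) x | j. True} = (\<lambda>j. (f ^^ j) x) ` {..<p}"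
proof
  show "{(f ^^ j) x | j. True} \<subseteq> (\<lambda>j. (f ^^ j) x) ` {..<p}"
  proof
    fix z assume "z \<in> {(f ^^ j) x | j. True}"
    then obtain j where "z = (f ^^ j) x" by blast
    then have "z = (f ^^ (j mod p)) x" using funpow_mod[OF assms(2)] by simp
    moreover have "j mod p < p" using assms(1) by simp
    ultimately show "z \<in> (\<lambda>j. (f ^^ j) x) ` {..<p}" by blast
  qed
  show "(\<lambda>j. (f ^^ j) x) ` {..<p} \<subseteq> {(f ^^ j) x | j. True}" by blast
qed

lemma lat_norm: "k \<in> int_lattice \<Longrightarrow> k \<noteq> 0 \<Longrightarrow> 1 \<le> norm k"
proof -
  assume "k \<in> int_lattice" "k \<noteq> 0"
  then obtain i where i: "k $ i \<noteq> 0" "k $ i \<in> \<int>" by (auto simp: lat_iff vec_eq_iff)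
  then have "1 \<le> \<bar>k $ i\<bar>" by (metis Ints_nonzero_abs_ge1)
  then show ?thesis using component_le_norm_cart[of k i] by linarith
qed

lemma tdist_ge: "(\<And>m. m \<in> int_lattice \<Longrightarrow> c \<le> norm (x - y - m)) \<Longrightarrow> c \<le> tdist x y"
  unfolding tdist_def using lat_zero by (intro cInf_greatest) auto

lemma tdist_le: "m \<in> int_lattice \<Longrightarrow> tdist x y \<le> norm (x - y - m)"
  unfolding tdist_def by (rule cInf_lower) (auto intro: bdd_belowI[where m=0])

lemma tdist_nonneg: "0 \<le> tdist x y"
  by (rule tdist_ge) simp


lemma lat_ball_finite:
  fixes R :: real
  shows "finite {m::real^'n. m \<in> int_lattice \<and> norm m \<le> R}"
proof -
  let ?I = "{-\<lceil>R\<rceil>..\<lceil>R\<rceil>}"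
  have "{m::real^'n. m \<in> int_lattice \<and> norm m \<le> R} \<subseteq> (\<lambda>f. \<chi> i. real_of_int (f i)) ` (PiE UNIV (\<lambda>_. ?I))"
  proof
    fix m :: "real^'n" assume m: "m \<in> {m. m \<in> int_lattice \<and> norm m \<le> R}"
    define f where "f = (\<lambda>i. \<lfloor>m $ i\<rfloor>)"
    have mi: "m $ i = real_of_int (f i)" for i
      using m by (auto simp: f_def lat_iff elim!: Ints_cases)
    have eq: "m = (\<chi> i. real_of_int (f i))"
      using mi by (simp add: vec_eq_iff)
    have "f i \<in> ?I" for i
    proof -
      have nm: "norm m \<le> R" using m by blast
      have "\<bar>m$i\<bar> \<le> R" using nm component_le_norm_cart[of m i] by linarith
      then have "\<bar>real_of_int (f i)\<bar> \<le> real_of_int \<lceil>R\<rceil>" using mi[of i] le_of_int_ceiling[of R] by linarith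
      then have "\<bar>f i\<bar> \<le> \<lceil>R\<rceil>" by (metis of_int_abs of_int_le_iff)
      then show ?thesis by (auto simp: abs_le_iff)
    qed
    then have "f \<in> PiE UNIV (\<lambda>_. ?I)" by (simp add: PiE_UNIV_domain)
    then show "m \<in> (\<lambda>f. \<chi> i. real_of_int (f i)) ` (PiE UNIV (\<lambda>_. ?I))" using eq by blast
  qed
  moreover have "finite (PiE (UNIV::'n set) (\<lambda>_. ?I))" by (rule finite_PiE) simp_all
  ultimately show ?thesis using finite_subset by blast
qed

lemma orbit_dist_in:
  assumes "finite Ob" "2 \<le> card Ob"
  shows "\<exists>u v. u \<in> Ob \<and> v \<in> Ob \<and> u \<noteq> v \<and> orbit_dist Ob = tdist u v"
proof -
  let ?S = "{tdist x y | x y. x \<in> Ob \<and> y \<in> Ob \<and> x \<noteq> y}"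
  have fin: "finite ?S"
    by (rule finite_subset[of _ "(\<lambda>(x,y). tdist x y) ` (Ob \<times> Ob)"]) (auto simp: assms(1))
  have "\<exists>u\<in>Ob. \<exists>v\<in>Ob. u \<noteq> v" using assms(2) card_le_Suc0_iff_eq[OF assms(1)] by auto
  then have "?S \<noteq> {}" by blast
  then have "Min ?S \<in> ?S" using fin by (rule Min_in[rotated])
  then obtain u v where "u \<in> Ob" "v \<in> Ob" "u \<noteq> v" "Min ?S = tdist u v" by auto
  then show ?thesis unfolding orbit_dist_def by auto
qed

lemma orbit_dist_le:
  assumes "finite Ob" "u \<in> Ob" "v \<in> Ob" "u \<noteq> v"
  shows "orbit_dist Ob \<le> tdist u v"
proof -
  let ?S = "{tdist x y | x y. x \<in> Ob \<and> y \<in> Ob \<and> x \<noteq> y}"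
  have fin: "finite ?S"
    by (rule finite_subset[of _ "(\<lambda>(x,y). tdist x y) ` (Ob \<times> Ob)"]) (auto simp: assms(1))
  then show ?thesis unfolding orbit_dist_def using assms by (intro Min_le) auto
qed

lemma periodic_orbit_finite:
  assumes "periodic_orbit M Ob" shows "finite Ob"
proof -
  obtain x0 p where "p > 0" "(tmap M ^^ p) x0 = x0" "Ob = {(tmap M ^^ j) x0 | j. True}"
    using assms unfolding periodic_orbit_def by blast
  then have "Ob = (\<lambda>j. (tmap M ^^ j) x0) ` {..<p}" using orbit_finite by simp
  then show ?thesis by simp
qed

lemma lift:
  fixes A P B :: "int^'n^'n" and K :: real
  assumes comm: "P ** A = B ** P" and dP: "det P \<noteq> 0"
    and K: "K > 0" "\<And>v. norm (rmat P *v v) \<le> norm v * K"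
    and Ob: "periodic_orbit B Ob" "card Ob \<ge> 2"
  shows "\<exists>Ob'. periodic_orbit A Ob' \<and> card Ob \<le> card Ob' \<and> min (orbit_dist Ob) 1 / K \<le> orbit_dist Ob'"
proof -
  obtain x0 p where x0: "x0 \<in> torus" "p > 0" "(tmap B ^^ p) x0 = x0"
    and Oeq: "Ob = {(tmap B ^^ j) x0 | j. True}"
    using Ob(1) unfolding periodic_orbit_def by blast
  let ?R = "rmat P"
  have "invertible ?R" using dP by (simp add: invertible_det_nz det_rmat)
  then obtain Ri where Ri: "?R ** Ri = mat 1" "Ri ** ?R = mat 1" unfolding invertible_def by blast
  have Rinj: "u = v" if "?R *v u = ?R *v v" for u v
  proof -
    have "Ri *v (?R *v u) = Ri *v (?R *v v)" using that by simp
    then show ?thesis by (simp add: matrix_vector_mul_assoc Ri(2))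
  qed
  define y0 where "y0 = fv (Ri *v x0)"
  have y0: "y0 \<in> torus" "tmap P y0 = x0"
    using x0(1) by (simp_all add: y0_def fv_torus tmap_fv2 matrix_vector_mul_assoc Ri fv_id)
  define F where "F = {y \<in> torus. tmap P y = x0}"
  have finF: "finite F"
  proof -
    define g where "g y = ?R *v y - x0" for y
    have ginj: "inj_on g F" by (auto simp: g_def inj_on_def intro: Rinj)
    have sub: "g ` F \<subseteq> {m. m \<in> int_lattice \<and> norm m \<le> real CARD('n) * K + norm x0}"
    proof
      fix m assume "m \<in> g ` F"
      then obtain y where y: "y \<in> torus" "tmap P y = x0" "m = g y" by (auto simp: F_def)
      have "fv (?R *v y) = fv x0" using y x0(1) by (simp add: tmap_fv fv_id)
      then have ml: "m \<in> int_lattice" by (simp add: y(3) g_def fv_eq_lat)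
      have yb: "\<bar>y$i\<bar> \<le> 1" for i
      proof -
        have "0 \<le> y$i \<and> y$i < 1" using y(1) unfolding torus_def by blast
        then show ?thesis by (simp add: abs_le_iff)
      qed
      have "norm y \<le> (\<Sum>i\<in>UNIV. \<bar>y$i\<bar>)" by (rule norm_le_l1_cart)
      also have "\<dots> \<le> (\<Sum>i\<in>(UNIV::'n set). 1)" using yb by (intro sum_mono) (auto)
      finally have ny: "norm y \<le> real CARD('n)" by simp
      have "norm m \<le> norm (?R *v y) + norm x0" unfolding y(3) g_def by (rule norm_triangle_ineq4)
      also have "\<dots> \<le> norm y * K + norm x0" using K(2) by simp
      also have "\<dots> \<le> real CARD('n) * K + norm x0" using ny K(1) by (simp add: mult_right_mono)
      finally show "m \<in> {m. m \<in> int_lattice \<and> norm m \<le> real CARD('n) * K + norm x0}" using ml by simp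
    qed
    have "finite (g ` F)" by (rule finite_subset[OF sub lat_ball_finite])
    then show ?thesis using ginj by (rule finite_imageD)
  qed
  define ys where "ys k = (tmap A ^^ (p * k)) y0" for k
  have ysF: "ys k \<in> F" for k
    using tmap_comm_pow[OF comm, of "p*k" y0] y0 funpow_period[OF x0(3)] pow_torus
    by (simp add: ys_def F_def)
  have "\<not> inj ys"
  proof
    assume "inj ys"
    moreover have "finite (range ys)" using finite_subset[OF _ finF, of "range ys"] ysF by blast
    ultimately have "finite (UNIV::nat set)" using finite_imageD by blast
    then show False by simp
  qed
  then obtain i0 j0 where ij0: "i0 \<noteq> j0" "ys i0 = ys j0" unfolding inj_def by blast
  obtain i j where ij: "i < j" "ys i = ys j"
  proof (cases "i0 < j0")
    case True then show ?thesis using ij0 that by blast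
  next
    case False then have "j0 < i0" using ij0(1) by simp
    then show ?thesis using ij0(2) that[of j0 i0] by simp
  qed
  define y where "y = ys i"
  define q where "q = p * (j - i)"
  have q: "q > 0" using ij x0(2) by (simp add: q_def)
  have yq: "(tmap A ^^ q) y = y"
  proof -
    have "(tmap A ^^ q) y = (tmap A ^^ (q + p*i)) y0" by (simp add: y_def ys_def funpow_add)
    also have "q + p*i = p*j" using ij by (simp add: q_def diff_mult_distrib2)
    finally show ?thesis using ij by (simp add: y_def ys_def)
  qed
  have yF: "y \<in> torus" "tmap P y = x0" using ysF by (auto simp: y_def F_def)
  define Ob' where "Ob' = {(tmap A ^^ j) y | j. True}"
  have per: "periodic_orbit A Ob'" unfolding periodic_orbit_def Ob'_def
    using yF(1) q yq by (intro bexI[of _ y] exI[of _ q]) simp_all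
  have finO': "finite Ob'" using per by (rule periodic_orbit_finite)
  have pt: "tmap P ((tmap A ^^ j) y) = (tmap B ^^ j) x0" for j
    using tmap_comm_pow[OF comm, of j y] yF(2) by simp
  have img: "tmap P ` Ob' = Ob"
    unfolding Ob'_def Oeq by (simp add: full_SetCompr_eq image_image pt)
  have finO: "finite Ob" unfolding img[symmetric] using finO' by (rule finite_imageI)
  have cardle: "card Ob \<le> card Ob'" using card_image_le[OF finO', of "tmap P"] unfolding img .
  have torO': "Ob' \<subseteq> torus" using pow_torus yF by (auto simp: Ob'_def)
  define d where "d = orbit_dist Ob"
  have c2': "2 \<le> card Ob'" using cardle Ob(2) by linarith
  obtain u v where uv: "u \<in> Ob'" "v \<in> Ob'" "u \<noteq> v" "orbit_dist Ob' = tdist u v"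
    using orbit_dist_in[OF finO' c2'] by blast
  have ut: "u \<in> torus" "v \<in> torus" using uv torO' by auto
  have "min d 1 / K \<le> tdist u v"
  proof (rule tdist_ge)
    fix m :: "real^'n" assume m: "m \<in> int_lattice"
    define w where "w = u - v - m"
    have Rw: "?R *v w = (?R *v u - ?R *v v) - ?R *v m"
      by (simp add: w_def matrix_vector_mult_diff_distrib)
    show "min d 1 / K \<le> norm (u - v - m)"
    proof (cases "tmap P u = tmap P v")
      case True
      then have "?R *v u - ?R *v v \<in> int_lattice" by (simp add: tmap_fv fv_eq_lat)
      then have Rwl: "?R *v w \<in> int_lattice" unfolding Rw by (rule lat_diff[OF _ lat_mult[OF m]])
      have "w \<notin> int_lattice"
      proof
        assume "w \<in> int_lattice"
        then have "w + m \<in> int_lattice" using lat_add[OF _ m] by blast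
        then have "u - v \<in> int_lattice" by (simp add: w_def)
        then have "fv u = fv v" by (simp add: fv_eq_lat)
        then show False using ut uv(3) by (simp add: fv_id)
      qed
      then have "?R *v w \<noteq> 0" using Rinj[of w 0] lat_zero by auto
      then have "1 \<le> norm (?R *v w)" using Rwl lat_norm by blast
      also have "\<dots> \<le> norm w * K" by (rule K(2))
      finally have "1 / K \<le> norm w" using K(1) by (simp add: field_simps)
      moreover have "min d 1 / K \<le> 1 / K" using K(1) by (simp add: divide_right_mono)
      ultimately show ?thesis by (simp add: w_def)
    next
      case False
      have inO: "tmap P u \<in> Ob" "tmap P v \<in> Ob" using uv(1,2) unfolding img[symmetric] by simp_all
      have "d \<le> tdist (tmap P u) (tmap P v)"
        unfolding d_def using orbit_dist_le[OF finO inO False] .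
      also have "\<dots> \<le> norm (tmap P u - tmap P v - (tmap P u - tmap P v - ?R *v w))"
      proof (rule tdist_le)
        have e: "tmap P u - tmap P v - ?R *v w
           = - (?R *v u - tmap P u) + (?R *v v - tmap P v) + ?R *v m"
          using Rw by (simp add: algebra_simps)
        show "tmap P u - tmap P v - ?R *v w \<in> int_lattice"
          unfolding e unfolding tmap_fv
          by (rule lat_add[OF lat_add[OF lat_uminus[OF fv_diff_lat] fv_diff_lat] lat_mult[OF m]])
      qed
      also have "\<dots> = norm (?R *v w)" by simp
      also have "\<dots> \<le> norm w * K" by (rule K(2))
      finally have "d / K \<le> norm w" using K(1) by (simp add: field_simps)
      moreover have "min d 1 / K \<le> d / K" using K(1) by (simp add: divide_right_mono)
      ultimately show ?thesis by (simp add: w_def)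
    qed
  qed
  then have "min (orbit_dist Ob) 1 / K \<le> orbit_dist Ob'" by (simp add: uv(4) d_def)
  then show ?thesis using per cardle by blast
qed

theorem lemma3p1:
  fixes A P B :: "int^'n^'n"
  assumes "det A \<noteq> 0"
    and "ergodic_tmap A"
    and "det P \<noteq> 0"
    and "P ** A = B ** P"
    and "\<exists>Orb. unif_distributed B Orb"
  shows "\<exists>Orb. unif_distributed A Orb"
proof -
  obtain Orb C where per: "\<And>k. periodic_orbit B (Orb k)" and c2: "\<And>k. 2 \<le> card (Orb k)"
    and C: "C > 0" "\<And>k. C \<le> orbit_dist (Orb k) ^ CARD('n) * real (card (Orb k))"
    and lim: "filterlim (\<lambda>k. card (Orb k)) at_top sequentially"
    using assms(5) unfolding unif_distributed_def orbit_period_def by blast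
  obtain K where K: "K > 0" "\<And>v. norm (rmat P *v v) \<le> norm v * K"
    using bounded_linear.pos_bounded[OF matrix_vector_mul_bounded_linear[of "rmat P"]] by blast
  have "\<forall>k. \<exists>O'. periodic_orbit A O' \<and> card (Orb k) \<le> card O' \<and>
          min (orbit_dist (Orb k)) 1 / K \<le> orbit_dist O'"
    using lift[OF assms(4) assms(3) K per c2] by blast
  then have "\<exists>Orb'. \<forall>k. periodic_orbit A (Orb' k) \<and> card (Orb k) \<le> card (Orb' k) \<and>
          min (orbit_dist (Orb k)) 1 / K \<le> orbit_dist (Orb' k)" by (rule choice)
  then obtain Orb' where O'all: "\<forall>k. periodic_orbit A (Orb' k) \<and> card (Orb k) \<le> card (Orb' k) \<and>
          min (orbit_dist (Orb k)) 1 / K \<le> orbit_dist (Orb' k)" by blast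
  have O': "\<And>k. periodic_orbit A (Orb' k)" "\<And>k. card (Orb k) \<le> card (Orb' k)"
    "\<And>k. min (orbit_dist (Orb k)) 1 / K \<le> orbit_dist (Orb' k)"
    using O'all by simp_all
  define C' where "C' = min C 2 / K ^ CARD('n)"
  have C'pos: "C' > 0" using C(1) K(1) by (simp add: C'_def)
  have bound: "C' \<le> orbit_dist (Orb' k) ^ CARD('n) * real (card (Orb' k))" for k
  proof -
    let ?d = "orbit_dist (Orb k)" and ?T = "real (card (Orb k))"
    obtain u v :: "real^'n" where "orbit_dist (Orb k) = tdist u v"
      using orbit_dist_in[OF periodic_orbit_finite[OF per[of k]] c2[of k]] by blast
    then have d0: "0 \<le> ?d" by (simp add: tdist_nonneg)
    have T2: "2 \<le> ?T" using c2[of k] by simp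
    have "min C 2 \<le> min ?d 1 ^ CARD('n) * ?T"
    proof (cases "?d \<le> 1")
      case True then show ?thesis using C(2)[of k] by simp
    next
      case False then show ?thesis using T2 by simp
    qed
    then have "C' \<le> min ?d 1 ^ CARD('n) * ?T / K ^ CARD('n)"
      unfolding C'_def using K(1) by (simp add: divide_right_mono)
    also have "\<dots> = (min ?d 1 / K) ^ CARD('n) * ?T" by (simp add: power_divide)
    also have "\<dots> \<le> orbit_dist (Orb' k) ^ CARD('n) * real (card (Orb' k))"
    proof (rule mult_mono)
      show "(min ?d 1 / K) ^ CARD('n) \<le> orbit_dist (Orb' k) ^ CARD('n)"
        using O'(3)[of k] d0 K(1) by (intro power_mono) auto
      show "?T \<le> real (card (Orb' k))" using O'(2)[of k] by simp
      show "0 \<le> orbit_dist (Orb' k) ^ CARD('n)"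
        using O'(3)[of k] d0 K(1) by (intro zero_le_power) (smt (verit) divide_nonneg_pos)
    qed simp
    finally show ?thesis .
  qed
  have "filterlim (\<lambda>k. card (Orb' k)) at_top sequentially"
    by (rule filterlim_at_top_mono[OF lim]) (use O'(2) in auto)
  moreover have "\<forall>k. periodic_orbit A (Orb' k) \<and> 2 \<le> card (Orb' k)"
    using O'(1,2) c2 order_trans by blast
  ultimately have "unif_distributed A Orb'"
    unfolding unif_distributed_def orbit_period_def using C'pos bound by blast
  then show ?thesis by blast
qed

end
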